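(* Let $P$ be a Poisson tensor on $\mathbb{R}^3$, let $H\in C^\infty(\mathbb{R}^3)$, let $S\in C^\infty(\mathbb{R}^3)$ satisfy $PdS=0$, and let $g$ be the symmetric tensor with components $g^{ij}=H^iH^j-\delta^{ij}\sum_k H^kH^k$. Consider the system $\dot{x}=PdH+gdS$, along which the time derivative of $S$ at a point $x$ is $dS/dt=d_xS\cdot(P\,d_xH+g\,d_xS)$. If $x$ is a regular point of $P$ (i.e. $P(x)\neq0$) with $d_xS\neq 0$, then $dS/dt=0$ at $x$ if and only if $x$ is an equilibrium of this system.
   Context: $\mathbb{R}^3$ carries the standard Euclidean metric, used to identify tangent and cotangent spaces with $\mathbb{R}^3$ and to pair covectors with vectors (denoted by a dot); $H^i=H_i=\partial H/\partial x^i$. A Poisson tensor is a skew-symmetric bivector field satisfying the Jacobi identity. *)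

theory Defs
  imports "HOL-Analysis.Analysis"
begin

definition pd :: "3 \<Rightarrow> (real^3 \<Rightarrow> 'b::real_normed_vector) \<Rightarrow> real^3 \<Rightarrow> 'b" where
  "pd i f x = frechet_derivative f (at x) (axis i 1)"

fun iter_pd :: "3 list \<Rightarrow> (real^3 \<Rightarrow> 'b::real_normed_vector) \<Rightarrow> real^3 \<Rightarrow> 'b" where
  "iter_pd [] f = f"
| "iter_pd (i # is) f = pd i (iter_pd is f)"

definition smooth :: "(real^3 \<Rightarrow> 'b::real_normed_vector) \<Rightarrow> bool" where
  "smooth f \<longleftrightarrow> (\<forall>is x. iter_pd is f differentiable (at x))"

text \<open>Differential of a function, identified with a vector via the Euclidean metric.\<close>
definition dif :: "(real^3 \<Rightarrow> real) \<Rightarrow> real^3 \<Rightarrow> real^3" where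
  "dif f x = (\<chi> i. pd i f x)"

text \<open>Poisson tensor: smooth bivector field (components P x $ i $ j = P^{ij}(x)),
  skew-symmetric, satisfying the Jacobi identity.\<close>
definition poisson_tensor :: "(real^3 \<Rightarrow> real^3^3) \<Rightarrow> bool" where
  "poisson_tensor P \<longleftrightarrow> smooth P
     \<and> (\<forall>x i j. P x $ i $ j = - (P x $ j $ i))
     \<and> (\<forall>x i j k. (\<Sum>l\<in>UNIV.
            P x $ i $ l * pd l (\<lambda>y. P y $ j $ k) x
          + P x $ j $ l * pd l (\<lambda>y. P y $ k $ i) x
          + P x $ k $ l * pd l (\<lambda>y. P y $ i $ j) x) = 0)"

definition gtensor :: "(real^3 \<Rightarrow> real) \<Rightarrow> real^3 \<Rightarrow> real^3^3" where
  "gtensor H x = (\<chi> i j. dif H x $ i * dif H x $ j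
                        - (if i = j then 1 else 0) * (\<Sum>k\<in>UNIV. dif H x $ k * dif H x $ k))"

definition vfield :: "(real^3 \<Rightarrow> real^3^3) \<Rightarrow> (real^3 \<Rightarrow> real) \<Rightarrow> (real^3 \<Rightarrow> real) \<Rightarrow> real^3 \<Rightarrow> real^3" where
  "vfield P H S x = P x *v dif H x + gtensor H x *v dif S x"

end

theory Submission
  imports Defs
begin

lemma g_mult: "gtensor H x *v s = (dif H x \<bullet> s) *\<^sub>R dif H x - (dif H x \<bullet> dif H x) *\<^sub>R s"
proof -
  define h where "h = dif H x"
  have "(gtensor H x *v s) $ i = ((h \<bullet> s) *\<^sub>R h - (h \<bullet> h) *\<^sub>R s) $ i" for i
  proof -
    have "(gtensor H x *v s) $ i = (\<Sum>j\<in>UNIV. h$i * h$j * s$j - (if i = j then (h \<bullet> h) * s$j else 0))"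
      unfolding gtensor_def matrix_vector_mult_def h_def[symmetric]
      by (simp only: vec_lambda_beta, intro sum.cong refl) (simp add: inner_vec_def algebra_simps)
    also have "\<dots> = h$i * (h \<bullet> s) - (h \<bullet> h) * s$i"
      by (simp add: sum_subtractf inner_vec_def sum_distrib_left mult.assoc)
    finally show ?thesis by simp
  qed
  thus ?thesis by (simp add: vec_eq_iff h_def)
qed

lemma skew_inner:
  fixes A :: "real^3^3"
  assumes "\<forall>i j. A $ i $ j = - (A $ j $ i)" "A *v s = 0"
  shows "s \<bullet> (A *v h) = 0"
proof -
  have "s \<bullet> (A *v h) = (\<Sum>i\<in>UNIV. \<Sum>j\<in>UNIV. s$i * A$i$j * h$j)"
    by (simp add: inner_vec_def matrix_vector_mult_def sum_distrib_left mult.assoc)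
  also have "\<dots> = (\<Sum>j\<in>UNIV. \<Sum>i\<in>UNIV. s$i * A$i$j * h$j)" by (rule sum.swap)
  also have "\<dots> = (\<Sum>j\<in>UNIV. - (h$j * (\<Sum>i\<in>UNIV. A$j$i * s$i)))"
  proof (intro sum.cong refl)
    fix j
    have "s$i * A$i$j * h$j = - (h$j * (A$j$i * s$i))" for i
      using assms(1) by (metis mult.commute mult.left_commute mult_minus_left)
    thus "(\<Sum>i\<in>UNIV. s$i * A$i$j * h$j) = - (h$j * (\<Sum>i\<in>UNIV. A$j$i * s$i))"
      by (simp add: sum_distrib_left sum_negf)
  qed
  also have "\<dots> = - (h \<bullet> (A *v s))"
    by (simp add: inner_vec_def matrix_vector_mult_def sum_negf)
  finally show ?thesis using assms(2) by simp
qed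

theorem mainTheorem8:
  fixes P :: "real^3 \<Rightarrow> real^3^3" and H S :: "real^3 \<Rightarrow> real" and x :: "real^3"
  assumes "poisson_tensor P"
    and "smooth H" and "smooth S"
    and "\<forall>y. P y *v dif S y = 0"
    and "P x \<noteq> 0"
    and "dif S x \<noteq> 0"
  shows "dif S x \<bullet> vfield P H S x = 0 \<longleftrightarrow> vfield P H S x = 0"
proof
  define h where "h = dif H x"
  define s where "s = dif S x"
  define A where "A = P x"
  have sk: "\<forall>i j. A $ i $ j = - (A $ j $ i)" using assms(1) unfolding poisson_tensor_def A_def by blast
  have As: "A *v s = 0" using assms(4) unfolding A_def s_def by blast
  have s0: "s \<noteq> 0" using assms(6) s_def by simp
  have v: "vfield P H S x = A *v h + ((h \<bullet> s) *\<^sub>R h - (h \<bullet> h) *\<^sub>R s)"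
    unfolding vfield_def g_mult A_def h_def s_def by simp
  have sA: "s \<bullet> (A *v h) = 0" by (rule skew_inner[OF sk As])
  assume "dif S x \<bullet> vfield P H S x = 0"
  hence e: "(h \<bullet> s) * (h \<bullet> s) - (h \<bullet> h) * (s \<bullet> s) = 0"
    unfolding v s_def[symmetric] using sA
    by (simp add: inner_add_right inner_diff_right inner_commute)
  define w where "w = (s \<bullet> s) *\<^sub>R h - (h \<bullet> s) *\<^sub>R s"
  have "w \<bullet> w = (s \<bullet> s) * ((s \<bullet> s) * (h \<bullet> h) - (h \<bullet> s) * (h \<bullet> s))"
    unfolding w_def by (simp add: inner_diff_left inner_diff_right inner_commute algebra_simps)
  hence "w \<bullet> w = 0" using e by simp
  hence "w = 0" by simp
  have ss: "s \<bullet> s \<noteq> 0" using s0 by simp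
  define c where "c = (h \<bullet> s) / (s \<bullet> s)"
  have "(s \<bullet> s) *\<^sub>R h = (h \<bullet> s) *\<^sub>R s" using \<open>w = 0\<close> unfolding w_def by simp
  hence "(1 / (s \<bullet> s)) *\<^sub>R ((s \<bullet> s) *\<^sub>R h) = (1 / (s \<bullet> s)) *\<^sub>R ((h \<bullet> s) *\<^sub>R s)" by simp
  hence hc: "h = c *\<^sub>R s" using ss unfolding c_def by simp
  have "h \<bullet> s = c * (s \<bullet> s)" using hc by simp
  hence "(h \<bullet> s) *\<^sub>R h - (h \<bullet> h) *\<^sub>R s = 0" using hc by (simp add: algebra_simps)
  moreover have "A *v h = 0" using hc As by (simp add: matrix_vector_mult_scaleR)
  ultimately show "vfield P H S x = 0" using v by simp
qed simp

end
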